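(* Let $a\geq 3$ and $m\geq 2a^2-a+2$ be integers, and suppose $[C(m,a)]$ is colored with red and blue so that there is no monochromatic solution of $L(m,a)$ in $[C(m,a)]$, with both $a-2$ and $a-1$ red. If $d$ is an integer with $a\mid d$ and $m-1\leq d\leq 2m-2$, then $d/a$ is blue.
   Context: For integers $m\geq 3$, $a\geq 1$, $L(m,a)$ denotes the equation $x_1+x_2+\cdots+x_{m-1}=a x_m$. For a positive integer $n$, $[n]=\{1,\dots,n\}$. A solution of $L(m,a)$ in $[n]$ is an $m$-tuple $(x_1,\dots,x_m)\in[n]^m$ (entries not necessarily distinct) satisfying the equation; given a 2-coloring of $[n]$, it is monochromatic if all $x_i$ have the same color. $C(m,a)$ denotes $\left\lceil \frac{m-1}{a}\left\lceil \frac{m-1}{a}\right\rceil\right\rceil$. *)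

theory Defs
  imports Complex_Main
begin

definition Cma :: "nat \<Rightarrow> nat \<Rightarrow> nat" where
  "Cma m a = nat (ceiling ((of_nat (m - 1) / of_nat a :: real) * of_int (ceiling (of_nat (m - 1) / of_nat a :: real))))"

definition is_solution :: "nat \<Rightarrow> nat \<Rightarrow> nat \<Rightarrow> (nat \<Rightarrow> nat) \<Rightarrow> bool" where
  "is_solution m a n x \<longleftrightarrow> (\<forall>i\<in>{1..m}. x i \<in> {1..n}) \<and> (\<Sum>i=1..m-1. x i) = a * x m"

text \<open>A 2-colouring of [n] is a function col :: nat => bool (True = red, False = blue),
  only its values on [n] being relevant.\<close>
definition has_mono_solution :: "nat \<Rightarrow> nat \<Rightarrow> nat \<Rightarrow> (nat \<Rightarrow> bool) \<Rightarrow> bool" where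
  "has_mono_solution m a n col \<longleftrightarrow>
     (\<exists>x. is_solution m a n x \<and> (\<exists>c. \<forall>i\<in>{1..m}. col (x i) = c))"

end

theory Submission
  imports Defs
begin

lemma mk_sol:
  fixes m a n c1 c2 c3 v1 v2 v3 w :: nat and col :: "nat \<Rightarrow> bool"
  assumes cs: "c1 + c2 + c3 = m - 1" and m1: "m \<ge> 1"
    and eq: "c1*v1 + c2*v2 + c3*v3 = a*w"
    and r: "v1 \<in> {1..n}" "v2 \<in> {1..n}" "v3 \<in> {1..n}" "w \<in> {1..n}"
    and c: "col v1 = c" "col v2 = c" "col v3 = c" "col w = c"
  shows "has_mono_solution m a n col"
proof -
  define x where "x i = (if i \<le> c1 then v1 else if i \<le> c1+c2 then v2 else if i \<le> c1+c2+c3 then v3 else w)" for i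
  have xm: "x m = w" using cs m1 unfolding x_def by auto
  have s1: "(\<Sum>i=1..c1. x i) = c1*v1"
    by (simp add: x_def)
  have s2: "(\<Sum>i=c1+1..c1+c2. x i) = c2*v2"
  proof -
    have "(\<Sum>i=c1+1..c1+c2. x i) = (\<Sum>i=c1+1..c1+c2. v2)"
      by (rule sum.cong) (auto simp: x_def)
    then show ?thesis by simp
  qed
  have s3: "(\<Sum>i=c1+c2+1..c1+c2+c3. x i) = c3*v3"
  proof -
    have "(\<Sum>i=c1+c2+1..c1+c2+c3. x i) = (\<Sum>i=c1+c2+1..c1+c2+c3. v3)"
      by (rule sum.cong) (auto simp: x_def)
    then show ?thesis by simp
  qed
  have "(\<Sum>i=1..c1+(c2+c3). x i) = (\<Sum>i=1..c1. x i) + (\<Sum>i=c1+1..c1+(c2+c3). x i)"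
    by (rule sum.ub_add_nat) simp
  moreover have "(\<Sum>i=c1+1..(c1+c2)+c3. x i) = (\<Sum>i=c1+1..c1+c2. x i) + (\<Sum>i=c1+c2+1..c1+c2+c3. x i)"
    by (rule sum.ub_add_nat) simp
  ultimately have "(\<Sum>i=1..m-1. x i) = a * x m"
    using s1 s2 s3 eq xm cs by (simp add: add.assoc)
  moreover have "\<forall>i\<in>{1..m}. x i \<in> {1..n}" using r by (auto simp: x_def)
  moreover have "\<forall>i\<in>{1..m}. col (x i) = c" using c by (auto simp: x_def)
  ultimately show ?thesis unfolding has_mono_solution_def is_solution_def by blast
qed

lemma Cbound:
  fixes m a :: nat assumes "a > 0"
  shows "(m-1)*(m-1) \<le> a*a*Cma m a"
proof -
  define r where "r = (of_nat (m - 1) / of_nat a :: real)"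
  have r0: "r \<ge> 0" by (simp add: r_def)
  have "r * of_int (ceiling r) \<ge> r * r"
    using r0 by (intro mult_left_mono) auto
  also have "real (Cma m a) \<ge> r * of_int (ceiling r)"
    unfolding Cma_def r_def[symmetric] by linarith
  finally have h: "r * r \<le> real (Cma m a)" .
  have "real ((m-1)*(m-1)) = (real a * real a) * (r*r)"
    using assms by (simp add: r_def field_simps)
  also have "\<dots> \<le> (real a * real a) * real (Cma m a)"
    using h by (intro mult_left_mono) auto
  finally have "real ((m-1)*(m-1)) \<le> real (a*a*Cma m a)" by simp
  then show ?thesis by linarith
qed

lemma c1: fixes A S L U :: int
  assumes "A \<ge> 3" "S \<ge> 2*A^2-A+1" "A*L \<le> S*(A-2)+A-1" "S*(A-1) < A*U + A"
  shows "(A-1)*L + (S-(A-1)) \<le> A*U"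
proof -
  have sq: "A*A \<ge> 3*A" using assms by (intro mult_right_mono) auto
  have S0: "S \<ge> 0" using assms(1,2) sq unfolding power2_eq_square by linarith
  have e1: "A*U \<ge> S*(A-1) - A + 1" using assms by linarith
  have k: "S*(A-2) \<ge> (A-1)*(A-1)"
  proof -
    have "S*(A-2) \<ge> S*1" using assms S0 by (intro mult_left_mono) auto
    moreover have "(A-1)*(A-1) = A*A - 2*A + 1" by (simp add: algebra_simps)
    ultimately show ?thesis using assms(1,2) sq unfolding power2_eq_square by linarith
  qed
  have "A*((A-1)*L + (S-(A-1))) = (A-1)*(A*L) + (A*S - A*A + A)" by (simp add: algebra_simps)
  also have "\<dots> \<le> (A-1)*(S*(A-2)+A-1) + (A*S - A*A + A)"
    using assms S0 by (intro add_right_mono mult_left_mono) auto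
  also have "\<dots> = A*(S*(A-1) - A + 1) - (S*(A-2) - (A-1)*(A-1))" by (simp add: algebra_simps)
  also have "\<dots> \<le> A*(S*(A-1) - A + 1)" using k by linarith
  also have "\<dots> \<le> A*(A*U)" using e1 assms by (intro mult_left_mono) auto
  finally show ?thesis using assms by simp
qed
lemma c2: fixes A S L U :: int
  assumes "A \<ge> 5" "S \<ge> 2*A^2-A+1" "A*L \<le> S*(A-2)+A-1" "S*(A-1) < A*U + A"
  shows "(A-2)*L + 2*(S-(A-2)) \<le> A*U"
proof -
  have sq: "A*A \<ge> 3*A" using assms by (intro mult_right_mono) auto
  have S0: "S \<ge> 0" using assms(1,2) sq unfolding power2_eq_square by linarith
  have e1: "A*U \<ge> S*(A-1) - A + 1" using assms by linarith
  have k: "S*(A-4) \<ge> 2"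
  proof -
    have "S*(A-4) \<ge> S*1" using assms S0 by (intro mult_left_mono) auto
    then show ?thesis using assms(1,2) sq unfolding power2_eq_square by linarith
  qed
  have "A*((A-2)*L + 2*(S-(A-2))) = (A-2)*(A*L) + (2*A*S - 2*A*A + 4*A)" by (simp add: algebra_simps)
  also have "\<dots> \<le> (A-2)*(S*(A-2)+A-1) + (2*A*S - 2*A*A + 4*A)"
    using assms S0 by (intro add_right_mono mult_left_mono) auto
  also have "\<dots> = A*(S*(A-1) - A + 1) - (S*(A-4) - 2)" by (simp add: algebra_simps)
  also have "\<dots> \<le> A*(S*(A-1) - A + 1)" using k by linarith
  also have "\<dots> \<le> A*(A*U)" using e1 assms by (intro mult_left_mono) auto
  finally show ?thesis using assms by simp
qed
lemma c3: fixes A S U :: int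
  assumes "A \<ge> 3" "S \<ge> 2*A^2-A+1" "A*U \<le> S*(A-1)"
  shows "U + (A-1) \<le> S"
proof -
  have sq: "A*A \<ge> 3*A" using assms by (intro mult_right_mono) auto
  have "A*(U + (A-1)) = A*U + (A*A - A)" by (simp add: algebra_simps)
  also have "\<dots> \<le> S*(A-1) + (A*A - A)" using assms by simp
  also have "\<dots> = A*S - (S - (A*A - A))" by (simp add: algebra_simps)
  also have "\<dots> \<le> A*S" using assms(1,2) sq unfolding power2_eq_square by linarith
  finally show ?thesis using assms by simp
qed

theorem lemma9:
  fixes m a d :: nat and col :: "nat \<Rightarrow> bool"
  assumes "a \<ge> 3"
    and "m \<ge> 2 * a^2 - a + 2"
    and "\<not> has_mono_solution m a (Cma m a) col"
    and "col (a - 2)" and "col (a - 1)"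
    and "a dvd d" and "m - 1 \<le> d" and "d \<le> 2 * m - 2"
  shows "\<not> col (d div a)"
proof
  assume colk: "col (d div a)"
  note nomono = assms(3)
  define s where "s = m - 1"
  define C where "C = Cma m a"
  have a3: "a \<ge> 3" by fact
  have aa: "a*a \<ge> 3*a" using a3 by simp
  have sq2: "a^2 = a*a" by (simp add: power2_eq_square)
  have hs: "s \<ge> 2*(a*a) - a + 1" using assms(2) unfolding s_def sq2 by linarith
  have m1: "m \<ge> 1" using hs s_def by linarith
  have hs': "int s \<ge> 2*(int a)^2 - int a + 1"
  proof -
    have "2*(a*a) \<ge> a" using aa by linarith
    then have e: "int (2*(a*a) - a + 1) = 2*(int a)^2 - int a + 1"
      by (simp add: of_nat_diff power2_eq_square)
    have "int (2*(a*a) - a + 1) \<le> int s" using hs by (simp only: of_nat_le_iff)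
    then show ?thesis using e by linarith
  qed
  have sge: "a*(a-1) \<le> s"
  proof -
    have "a*(a-1) \<le> a*a" by simp
    then show ?thesis using hs aa by linarith
  qed
  have s2a: "2*a \<le> s" using hs aa by linarith
  have hC: "s*s \<le> a*a*C" unfolding s_def C_def using Cbound a3 by simp
  have am1: "a - 1 = Suc (a-2)" using a3 by simp
  have hs12: "s*(a-1) = s*(a-2) + s" unfolding am1 by simp
  define U where "U = s*(a-1) div a"
  define L where "L = (s*(a-2) + (a-1)) div a"
  have eU: "a*U + s*(a-1) mod a = s*(a-1)" unfolding U_def by (rule mult_div_mod_eq)
  have mU: "s*(a-1) mod a < a" using a3 by simp
  have eL: "a*L + (s*(a-2)+(a-1)) mod a = s*(a-2)+(a-1)" unfolding L_def by (rule mult_div_mod_eq)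
  have mL: "(s*(a-2)+(a-1)) mod a < a" using a3 by simp
  have hU1: "a*U \<le> s*(a-1)" using eU by linarith
  have hU2: "s*(a-1) < a*U + a" using eU mU by linarith
  have hL1: "s*(a-2) \<le> a*L" using eL mL a3 by linarith
  have hL2: "a*L \<le> s*(a-2)+(a-1)" using eL by linarith
  have ia: "int (a-1) = int a - 1" "int (a-2) = int a - 2" using a3 by auto
  have iU1: "int a * int U \<le> int s * (int a - 1)"
  proof -
    have "int (a*U) \<le> int (s*(a-1))" using hU1 by (simp only: of_nat_le_iff)
    then show ?thesis by (simp only: of_nat_mult ia)
  qed
  have iU2: "int s * (int a - 1) < int a * int U + int a"
  proof -
    have "int (s*(a-1)) < int (a*U + a)" using hU2 by (simp only: of_nat_less_iff)
    then show ?thesis by (simp only: of_nat_mult of_nat_add ia)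
  qed
  have iL2: "int a * int L \<le> int s * (int a - 2) + int a - 1"
  proof -
    have "int (a*L) \<le> int (s*(a-2)+(a-1))" using hL2 by (simp only: of_nat_le_iff)
    then show ?thesis by (simp only: of_nat_mult of_nat_add ia)
  qed
  have UleC: "U \<le> C"
  proof -
    have "a*(a*U) \<le> a*(s*(a-1))" using hU1 by simp
    also have "\<dots> = s*(a*(a-1))" by simp
    also have "\<dots> \<le> s*s" using sge by simp
    also have "\<dots> \<le> a*(a*C)" using hC by simp
    finally have "a*U \<le> a*C" using a3 by simp
    then show ?thesis using a3 by simp
  qed
  have Lge: "a - 1 \<le> L"
  proof -
    have "s*1 \<le> s*(a-2)" using a3 by (intro mult_le_mono2) simp
    then have "a*(a-1) \<le> a*L" using sge hL1 by linarith
    then show ?thesis using a3 by simp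
  qed
  have LleU: "L \<le> U"
  proof -
    have "a*L < a*(Suc U)" using hL2 hU2 hs12 s2a a3 by simp
    then have "L < Suc U" by (metis mult_less_cancel1)
    then show ?thesis by simp
  qed
  have nm: "\<not> has_mono_solution m a C col" using nomono unfolding C_def .
  have msub: "m - 1 = s" by (simp add: s_def)
  have blue: "\<not> col y" if yL: "L \<le> y" and yU: "y \<le> U" for y
  proof
    assume cy: "col y"
    have ay1: "s*(a-2) \<le> a*y" using hL1 yL by (meson le_trans mult_le_mono2)
    have ay2: "a*y \<le> s*(a-2) + s" using hU1 yU hs12 by (metis le_trans mult_le_mono2)
    define c1 where "c1 = a*y - s*(a-2)"
    have c1s: "c1 \<le> s" using ay2 c1_def by linarith
    have e1: "c1*(a-1) = c1*(a-2) + c1" unfolding am1 by simp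
    have e2: "(s-c1)*(a-2) + c1*(a-2) = s*(a-2)"
      using c1s by (simp add: add_mult_distrib[symmetric])
    have eq: "c1*(a-1) + (s-c1)*(a-2) + 0*(a-1) = a*y"
      using e1 e2 ay1 c1_def by linarith
    have "has_mono_solution m a C col"
      apply (rule mk_sol[of c1 "s-c1" 0 m "a-1" "a-2" "a-1" a y C col True])
      using c1s msub m1 eq a3 Lge LleU UleC yL yU cy assms(4,5) by auto
    then show False using nm by simp
  qed
  have blue_t: False if tb: "\<not> col t" and t1: "1 \<le> t" and tC: "t \<le> C" and j1: "1 \<le> j"
    and js: "j \<le> s" and h1: "(s-j)*t + j*L \<le> a*U" and h2: "a*U \<le> (s-j)*t + j*U" for t j
  proof -
    define v where "v = a*U - (s-j)*t"
    define q where "q = v div j"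
    define r where "r = v mod j"
    have ev: "j*q + r = v" unfolding q_def r_def by (rule mult_div_mod_eq)
    have rj: "r < j" unfolding r_def using j1 by simp
    have vL: "j*L \<le> v" using h1 v_def by linarith
    have vU: "v \<le> j*U" using h2 v_def by linarith
    have "j*L < j*(Suc q)" using vL ev rj by simp
    then have qL: "L \<le> q" by (metis mult_less_cancel1 less_Suc_eq_le)
    have "j*q \<le> j*U" using vU ev by linarith
    then have qU: "q \<le> U" using j1 by simp
    define v3 where "v3 = (if r = 0 then q else q+1)"
    have v3L: "L \<le> v3" using qL v3_def by simp
    have v3U: "v3 \<le> U"
    proof (cases "r = 0")
      case True then show ?thesis using qU v3_def by simp
    next
      case False
      then have "j*q < j*U" using vU ev by linarith
      then have "q < U" by (metis mult_less_cancel1)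
      then show ?thesis using False v3_def by simp
    qed
    have e3: "(j-r)*q + r*v3 = v"
    proof (cases "r = 0")
      case True then show ?thesis using ev v3_def by simp
    next
      case False
      have "(j-r)*q + r*q = j*q" using rj by (simp add: add_mult_distrib[symmetric])
      then show ?thesis using ev v3_def False by simp
    qed
    have eq: "(s-j)*t + (j-r)*q + r*v3 = a*U" using e3 v_def h1 by linarith
    have "has_mono_solution m a C col"
      apply (rule mk_sol[of "s-j" "j-r" r m t q v3 a U C col False])
      using js rj msub m1 eq t1 tC tb qL qU v3L v3U Lge LleU UleC a3
        blue[of q] blue[of v3] blue[of U] by auto
    then show False using nm by simp
  qed
  have a1s: "a - 1 \<le> s" using s2a by linarith
  have C1: "a - 1 \<le> C" using Lge LleU UleC by linarith
  have Us: "U + (a-1) \<le> s"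
  proof -
    have "int U + (int a - 1) \<le> int s" using c3[OF _ hs' iU1] a3 by simp
    then show ?thesis using a3 by linarith
  qed
  have aU: "a*U = (a-1)*U + U"
  proof -
    have "Suc (a-1) * U = (a-1)*U + U" by simp
    moreover have "Suc (a-1) = a" using a3 by simp
    ultimately show ?thesis by simp
  qed
  have aU2: "a*U = (a-2)*U + 2*U"
  proof -
    have f: "((a-2)+2) * U = (a-2)*U + 2*U" by (simp add: add_mult_distrib)
    have e: "(a-2)+2 = a" using a3 by simp
    show ?thesis using f unfolding e .
  qed
  have col1: "col 1"
  proof (rule ccontr)
    assume nc: "\<not> col 1"
    have "(int a - 1)*int L + (int s - (int a - 1)) \<le> int a * int U"
      using c1[OF _ hs' iL2 iU2] a3 by simp
    then have "int ((s-(a-1))*1 + (a-1)*L) \<le> int (a*U)" using a1s a3 by (simp add: of_nat_diff)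
    then have h1: "(s-(a-1))*1 + (a-1)*L \<le> a*U" by (simp only: of_nat_le_iff)
    have h2: "a*U \<le> (s-(a-1))*1 + (a-1)*U" using aU Us by linarith
    have o: "1 \<le> C" "1 \<le> a-1" using C1 a3 by linarith+
    show False using blue_t[OF nc order.refl o a1s h1 h2] .
  qed
  have col2: "col 2"
  proof (cases "a \<le> 4")
    case True
    then have "a = 3 \<or> a = 4" using a3 by linarith
    then show ?thesis using assms(4,5) by auto
  next
    case False
    show ?thesis
    proof (rule ccontr)
      assume nc: "\<not> col 2"
      have a2s: "a - 2 \<le> s" using a1s by linarith
      have "(int a - 2)*int L + 2*(int s - (int a - 2)) \<le> int a * int U"
        using c2[OF _ hs' iL2 iU2] False by simp
      then have "int ((s-(a-2))*2 + (a-2)*L) \<le> int (a*U)" using a2s a3 by (simp add: of_nat_diff)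
      then have h1: "(s-(a-2))*2 + (a-2)*L \<le> a*U" by (simp only: of_nat_le_iff)
      have h2: "a*U \<le> (s-(a-2))*2 + (a-2)*U" using aU2 Us by linarith
      have o: "2 \<le> C" "1 \<le> a-2" using C1 a3 by linarith+
      show False using blue_t[OF nc _ o a2s h1 h2] by simp
    qed
  qed
  define k where "k = d div a"
  have dk: "d = a*k" using assms(6) k_def by simp
  have ds: "s \<le> d" "d \<le> 2*s" using assms(7,8) s_def by auto
  have k1: "1 \<le> k"
  proof (rule ccontr)
    assume "\<not> 1 \<le> k"
    then have "k = 0" by simp
    then show False using dk ds s2a a3 by simp
  qed
  have kC: "k \<le> C"
  proof -
    have "a*(a*k) \<le> a*(2*s)" using dk ds by simp
    also have "\<dots> = s*(2*a)" by simp
    also have "\<dots> \<le> s*s" using s2a by simp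
    also have "\<dots> \<le> a*(a*C)" using hC by simp
    finally have "a*k \<le> a*C" using a3 by simp
    then show ?thesis using a3 by simp
  qed
  have eq: "(d-s)*2 + (s-(d-s))*1 + 0*2 = a*k" using ds dk by linarith
  have "has_mono_solution m a C col"
    apply (rule mk_sol[of "d-s" "s-(d-s)" 0 m 2 1 2 a k C col True])
    using ds msub m1 eq k1 kC col1 col2 colk k_def C1 a3 by auto
  then show False using nm by simp
qed

end
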